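(* Let $F$ be a heavy-tailed distribution on $[0,\infty)$. If for some $c\in(0,\infty)$ $$\int_0^x\overline{F}(x-y)\overline{F}(y)\,dy\sim c\,\overline{F}(x)\quad\text{as }x\to\infty,$$ then $F$ has a finite mean $a$ and $F\in\mathcal S^*$, i.e. $\int_0^x\overline{F}(x-y)\overline{F}(y)\,dy\sim 2a\overline{F}(x)$ as $x\to\infty$.
   Context: $\overline{F}(x)=F(x,\infty)$, assumed positive for all $x$. $F$ is heavy-tailed if $\int_0^\infty e^{\gamma x}F(dx)=\infty$ for every $\gamma>0$. A distribution $F$ on $[0,\infty)$ with finite mean $a$ belongs to the class $\mathcal S^*$ if $\int_0^x\overline{F}(x-y)\overline{F}(y)\,dy\sim 2a\overline{F}(x)$ as $x\to\infty$. *)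

theory Defs
  imports "HOL-Probability.Probability" "HOL-Library.Landau_Symbols"
begin

definition tail :: "real measure \<Rightarrow> real \<Rightarrow> real" where
  "tail M x = measure M {x<..}"

definition distribution_on_nonneg :: "real measure \<Rightarrow> bool" where
  "distribution_on_nonneg M \<longleftrightarrow> prob_space M \<and> sets M = sets borel \<and> measure M {0..} = 1"

definition heavy_tailed :: "real measure \<Rightarrow> bool" where
  "heavy_tailed M \<longleftrightarrow> (\<forall>\<gamma>>0. (\<integral>\<^sup>+ x. ennreal (exp (\<gamma> * x)) \<partial>M) = \<infinity>)"

definition tail_conv :: "real measure \<Rightarrow> real \<Rightarrow> real" where
  "tail_conv M x = integral {0..x} (\<lambda>y. tail M (x - y) * tail M y)"

end

theory Submission
  imports Defs
begin

lemma tail_basic: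
  assumes D: "distribution_on_nonneg M"
  shows "0 \<le> tail M x" "tail M x \<le> 1" "x \<le> y \<Longrightarrow> tail M y \<le> tail M x"
proof -
  interpret prob_space M using D by (simp add: distribution_on_nonneg_def)
  have S: "sets M = sets borel" using D by (simp add: distribution_on_nonneg_def)
  show "0 \<le> tail M x" by (simp add: tail_def)
  show "tail M x \<le> 1" by (simp add: tail_def)
  show "x \<le> y \<Longrightarrow> tail M y \<le> tail M x" unfolding tail_def
    by (rule finite_measure_mono) (auto simp: S)
qed

lemma tail_meas:
  assumes D: "distribution_on_nonneg M"
  shows "tail M \<in> borel_measurable borel"
proof -
  have "mono (\<lambda>x. - tail M x)" using tail_basic(3)[OF D] by (auto simp: mono_def)
  then have "(\<lambda>x. - tail M x) \<in> borel_measurable borel" by (rule borel_measurable_mono)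
  then have "(\<lambda>x. - (- tail M x)) \<in> borel_measurable borel" by measurable
  then show ?thesis by simp
qed

lemma bounded_hk_nn:
  fixes h :: "real \<Rightarrow> real"
  assumes [measurable]: "h \<in> borel_measurable borel"
    and nn: "\<And>x. x\<in>{a..b} \<Longrightarrow> 0 \<le> h x" and bd: "\<And>x. x \<in> {a..b} \<Longrightarrow> h x \<le> B"
  shows "h integrable_on {a..b}"
    "(\<integral>\<^sup>+x. ennreal (indicator {a..b} x * h x) \<partial>lborel) = ennreal (integral {a..b} h)"
proof -
  have fin: "emeasure lborel {a..b} < \<infinity>"
    by (cases "a \<le> b") auto
  have si: "set_integrable lborel {a..b} h"
    unfolding set_integrable_def
    by (rule integrableI_bounded_set_indicator[where B=B]) (use fin nn bd in auto)
  show "h integrable_on {a..b}" using set_borel_integral_eq_integral(1)[OF si] .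
  then have "(h has_integral integral {a..b} h) {a..b}" by (rule integrable_integral)
  then show "(\<integral>\<^sup>+x. ennreal (indicator {a..b} x * h x) \<partial>lborel) = ennreal (integral {a..b} h)"
    using nn_integral_has_integral_lebesgue[of "{a..b}" h, OF nn] by simp
qed

lemma swap_conv:
  fixes h u v :: "real \<Rightarrow> ennreal"
  assumes [measurable]: "h \<in> borel_measurable borel" "u \<in> borel_measurable borel" "v \<in> borel_measurable borel"
  shows "(\<integral>\<^sup>+x. h x * (\<integral>\<^sup>+y. u (x - y) * v y \<partial>lborel) \<partial>lborel)
       = (\<integral>\<^sup>+y. v y * (\<integral>\<^sup>+z. h (z + y) * u z \<partial>lborel) \<partial>lborel)"
proof -
  have "(\<integral>\<^sup>+x. h x * (\<integral>\<^sup>+y. u (x - y) * v y \<partial>lborel) \<partial>lborel)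
      = (\<integral>\<^sup>+x. (\<integral>\<^sup>+y. h x * (u (x - y) * v y) \<partial>lborel) \<partial>lborel)"
    by (intro nn_integral_cong nn_integral_cmult[symmetric]) auto
  also have "\<dots> = (\<integral>\<^sup>+y. (\<integral>\<^sup>+x. h x * (u (x - y) * v y) \<partial>lborel) \<partial>lborel)"
    by (intro lborel_pair.Fubini'[symmetric]) simp
  also have "\<dots> = (\<integral>\<^sup>+y. v y * (\<integral>\<^sup>+x. h x * u (x - y) \<partial>lborel) \<partial>lborel)"
    by (intro nn_integral_cong) (subst nn_integral_cmult[symmetric], auto simp: ac_simps)
  also have "\<dots> = (\<integral>\<^sup>+y. v y * (\<integral>\<^sup>+z. h (z + y) * u z \<partial>lborel) \<partial>lborel)"
  proof -
    have aff: "(\<integral>\<^sup>+x. h x * u (x - y) \<partial>lborel) = (\<integral>\<^sup>+z. h (z + y) * u z \<partial>lborel)" for y :: real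
      by (subst nn_integral_real_affine[where c=1 and t=y]) (auto simp: add.commute)
    show ?thesis by (simp add: aff)
  qed
  finally show ?thesis .
qed

lemma layer:
  fixes k :: "real \<Rightarrow> ennreal"
  assumes D: "distribution_on_nonneg M" and [measurable]: "k \<in> borel_measurable borel"
  shows "(\<integral>\<^sup>+x. (\<integral>\<^sup>+t. indicator {0..<x} t * k t \<partial>lborel) \<partial>M)
       = (\<integral>\<^sup>+t. indicator {0..} t * k t * ennreal (tail M t) \<partial>lborel)"
proof -
  interpret prob_space M using D by (simp add: distribution_on_nonneg_def)
  have S: "sets M = sets borel" using D by (simp add: distribution_on_nonneg_def)
  interpret P: pair_sigma_finite M lborel ..
  have eq: "\<And>x t. indicator {0..<x} t * k t = (if 0 \<le> t \<and> t < x then k t else 0)"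
    by (auto split: split_indicator)
  have m: "(\<lambda>(x, t). (if 0 \<le> t \<and> t < x then k t else 0)) \<in> borel_measurable (borel \<Otimes>\<^sub>M borel)"
    by measurable
  have m2: "(\<lambda>(x, t). (if 0 \<le> t \<and> t < (x::real) then k t else 0)) \<in> borel_measurable (M \<Otimes>\<^sub>M lborel)"
    using m by (subst measurable_cong_sets[OF sets_pair_measure_cong[OF S sets_lborel] refl]) 
  have "(\<integral>\<^sup>+x. (\<integral>\<^sup>+t. indicator {0..<x} t * k t \<partial>lborel) \<partial>M)
      = (\<integral>\<^sup>+x. (\<integral>\<^sup>+t. (if 0 \<le> t \<and> t < x then k t else 0) \<partial>lborel) \<partial>M)"
    by (simp add: eq)
  also have "\<dots> = (\<integral>\<^sup>+t. (\<integral>\<^sup>+x. (if 0 \<le> t \<and> t < x then k t else 0) \<partial>M) \<partial>lborel)"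
    by (rule P.Fubini'[symmetric]) (use m2 in simp)
  also have "\<dots> = (\<integral>\<^sup>+t. indicator {0..} t * k t * ennreal (tail M t) \<partial>lborel)"
  proof (intro nn_integral_cong)
    fix t :: real
    have "(\<integral>\<^sup>+x. (if 0 \<le> t \<and> t < x then k t else 0) \<partial>M) = (\<integral>\<^sup>+x. (indicator {0..} t * k t) * indicator {t<..} x \<partial>M)"
      by (intro nn_integral_cong) (auto split: split_indicator)
    also have "\<dots> = (indicator {0..} t * k t) * emeasure M {t<..}"
      by (rule nn_integral_cmult_indicator) (simp add: S)
    also have "\<dots> = indicator {0..} t * k t * ennreal (tail M t)"
      by (simp add: tail_def emeasure_eq_measure)
    finally show "(\<integral>\<^sup>+x. (if 0 \<le> t \<and> t < x then k t else 0) \<partial>M) = indicator {0..} t * k t * ennreal (tail M t)" .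
  qed
  finally show ?thesis .
qed

lemma mean_eq:
  assumes D: "distribution_on_nonneg M"
  shows "(\<integral>\<^sup>+x. ennreal x \<partial>M) = (\<integral>\<^sup>+t. indicator {0..} t * ennreal (tail M t) \<partial>lborel)"
proof -
  have "(\<integral>\<^sup>+x. ennreal x \<partial>M) = (\<integral>\<^sup>+x. (\<integral>\<^sup>+t. indicator {0..<x} t * 1 \<partial>lborel) \<partial>M)"
  proof (intro nn_integral_cong)
    fix x :: real
    show "ennreal x = (\<integral>\<^sup>+t. indicator {0..<x} t * 1 \<partial>lborel)"
      by (cases "0 \<le> x") (auto simp: ennreal_neg)
  qed
  also have "\<dots> = (\<integral>\<^sup>+t. indicator {0..} t * 1 * ennreal (tail M t) \<partial>lborel)"
    by (rule layer[OF D]) simp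
  finally show ?thesis by simp
qed

lemma exp_ftc:
  fixes g :: real
  assumes "0 \<le> x" "0 \<le> g"
  shows "(\<integral>\<^sup>+t. indicator {0..<x} t * ennreal (g * exp (g * t)) \<partial>lborel) = ennreal (exp (g * x) - 1)"
proof -
  have "((\<lambda>t. g * exp (g * t)) has_integral (exp (g * x) - exp (g * 0))) {0..x}"
  proof (rule fundamental_theorem_of_calculus[OF assms(1)])
    fix t assume "t \<in> {0..x}"
    have "((\<lambda>t. exp (g * t)) has_real_derivative g * exp (g * t)) (at t within {0..x})"
      by (auto intro!: derivative_eq_intros)
    then show "((\<lambda>t. exp (g * t)) has_vector_derivative g * exp (g * t)) (at t within {0..x})"
      by (simp add: has_real_derivative_iff_has_vector_derivative)
  qed
  then have hi: "((\<lambda>t. g * exp (g * t)) has_integral (exp (g * x) - 1)) {0..x}" by simp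
  have "(\<integral>\<^sup>+t. ennreal (indicator {0..x} t * (g * exp (g * t))) \<partial>lborel) = ennreal (exp (g * x) - 1)"
    by (rule nn_integral_has_integral_lebesgue[OF _ hi]) (use assms in auto)
  moreover have "(\<integral>\<^sup>+t. indicator {0..<x} t * ennreal (g * exp (g * t)) \<partial>lborel)
     = (\<integral>\<^sup>+t. ennreal (indicator {0..x} t * (g * exp (g * t))) \<partial>lborel)"
    by (intro nn_integral_cong_AE, use AE_lborel_singleton[of x] in eventually_elim)
       (auto split: split_indicator)
  ultimately show ?thesis by simp
qed

lemma heavy_int:
  assumes D: "distribution_on_nonneg M" and g: "0 < g"
    and H: "(\<integral>\<^sup>+ x. ennreal (exp (g * x)) \<partial>M) = \<infinity>"
  shows "(\<integral>\<^sup>+t. indicator {0..} t * ennreal (exp (g * t) * tail M t) \<partial>lborel) = \<infinity>"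
proof -
  interpret prob_space M using D by (simp add: distribution_on_nonneg_def)
  have S[measurable_cong]: "sets M = sets borel" using D by (simp add: distribution_on_nonneg_def)
  have "\<infinity> = (\<integral>\<^sup>+ x. ennreal (exp (g * x)) \<partial>M)" using H by simp
  also have "\<dots> \<le> (\<integral>\<^sup>+ x. 1 + ennreal (exp (g * x) - 1) \<partial>M)"
  proof (intro nn_integral_mono)
    fix x
    show "ennreal (exp (g * x)) \<le> 1 + ennreal (exp (g * x) - 1)"
    proof (cases "exp (g * x) \<le> 1")
      case True then show ?thesis
        by (metis add_increasing2 ennreal_le_1 zero_le)
    next
      case False
      have "ennreal (exp (g * x)) = ennreal (1 + (exp (g * x) - 1))" by simp
      also have "\<dots> = 1 + ennreal (exp (g * x) - 1)"
        using False by (subst ennreal_plus) auto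
      finally show ?thesis by simp
    qed
  qed
  also have "\<dots> = 1 + (\<integral>\<^sup>+ x. ennreal (exp (g * x) - 1) \<partial>M)"
    by (subst nn_integral_add) (auto simp: emeasure_space_1)
  also have "(\<integral>\<^sup>+ x. ennreal (exp (g * x) - 1) \<partial>M)
     = (\<integral>\<^sup>+x. (\<integral>\<^sup>+t. indicator {0..<x} t * ennreal (g * exp (g * t)) \<partial>lborel) \<partial>M)"
  proof (intro nn_integral_cong)
    fix x :: real
    show "ennreal (exp (g * x) - 1) = (\<integral>\<^sup>+t. indicator {0..<x} t * ennreal (g * exp (g * t)) \<partial>lborel)"
    proof (cases "0 \<le> x")
      case True then show ?thesis using exp_ftc[of x g] g by simp
    next
      case False
      then have "exp (g * x) - 1 \<le> 0" using g by (simp add: mult_pos_neg less_imp_le)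
      then show ?thesis using False by (simp add: ennreal_neg)
    qed
  qed
  also have "\<dots> = (\<integral>\<^sup>+t. indicator {0..} t * ennreal (g * exp (g * t)) * ennreal (tail M t) \<partial>lborel)"
    by (rule layer[OF D]) simp
  also have "\<dots> = (\<integral>\<^sup>+t. ennreal g * (indicator {0..} t * ennreal (exp (g * t) * tail M t)) \<partial>lborel)"
    by (intro nn_integral_cong) (use g in \<open>auto simp: ennreal_mult' tail_basic[OF D] mult_ac\<close>)
  also have "\<dots> = ennreal g * (\<integral>\<^sup>+t. indicator {0..} t * ennreal (exp (g * t) * tail M t) \<partial>lborel)"
    proof -
      have [measurable]: "tail M \<in> borel_measurable borel" by (rule tail_meas[OF D])
      show ?thesis by (intro nn_integral_cmult) measurable
    qed
  finally have "(\<integral>\<^sup>+t. indicator {0..} t * ennreal (exp (g * t) * tail M t) \<partial>lborel) \<noteq> \<infinity> \<Longrightarrow> False"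
    by (simp add: ennreal_mult_eq_top_iff top_unique)
  then show ?thesis by blast
qed

definition fe :: "real measure \<Rightarrow> real \<Rightarrow> ennreal" where
  "fe M x = indicator {0..} x * ennreal (tail M x)"

lemma fe_meas[measurable]: 
  assumes D: "distribution_on_nonneg M" shows "fe M \<in> borel_measurable borel"
proof -
  have [measurable]: "tail M \<in> borel_measurable borel" by (rule tail_meas[OF D])
  show ?thesis unfolding fe_def by measurable
qed

lemma I_eq:
  assumes D: "distribution_on_nonneg M" and x: "0 \<le> x"
  shows "ennreal (tail_conv M x) = (\<integral>\<^sup>+y. fe M (x - y) * fe M y \<partial>lborel)"
proof -
  have [measurable]: "tail M \<in> borel_measurable borel" by (rule tail_meas[OF D])
  have h: "(\<integral>\<^sup>+y. ennreal (indicator {0..x} y * (tail M (x - y) * tail M y)) \<partial>lborel)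
      = ennreal (integral {0..x} (\<lambda>y. tail M (x - y) * tail M y))"
    by (rule bounded_hk_nn(2)[where B=1]) (auto simp: tail_basic[OF D] mult_le_one)
  have "(\<integral>\<^sup>+y. fe M (x - y) * fe M y \<partial>lborel) = 
     (\<integral>\<^sup>+y. ennreal (indicator {0..x} y * (tail M (x - y) * tail M y)) \<partial>lborel)"
    by (intro nn_integral_cong) 
       (auto simp: fe_def ennreal_mult tail_basic[OF D] split: split_indicator)
  then show ?thesis using h by (simp add: tail_conv_def)
qed

lemma conv_total:
  assumes D: "distribution_on_nonneg M"
  shows "(\<integral>\<^sup>+x. (\<integral>\<^sup>+y. fe M (x - y) * fe M y \<partial>lborel) \<partial>lborel) = (\<integral>\<^sup>+x. fe M x \<partial>lborel)^2"
proof -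
  have [measurable]: "fe M \<in> borel_measurable borel" by (rule fe_meas[OF D])
  have "(\<integral>\<^sup>+x. (\<integral>\<^sup>+y. fe M (x - y) * fe M y \<partial>lborel) \<partial>lborel)
    = (\<integral>\<^sup>+x. (\<lambda>_. 1) x * (\<integral>\<^sup>+y. fe M (x - y) * fe M y \<partial>lborel) \<partial>lborel)" by simp
  also have "\<dots> = (\<integral>\<^sup>+y. fe M y * (\<integral>\<^sup>+z. (\<lambda>_. 1) (z + y) * fe M z \<partial>lborel) \<partial>lborel)"
    by (rule swap_conv) auto
  also have "\<dots> = (\<integral>\<^sup>+y. fe M y \<partial>lborel) * (\<integral>\<^sup>+z. fe M z \<partial>lborel)"
    by (simp add: nn_integral_multc)
  finally show ?thesis by (simp add: power2_eq_square)
qed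

lemma conv_bound:
  fixes t :: real
  assumes D: "distribution_on_nonneg M" and g: "0 \<le> g"
  defines "h \<equiv> \<lambda>x. indicator {..t} x * ennreal (exp (g * x))"
  shows "(\<integral>\<^sup>+x. h x * (\<integral>\<^sup>+y. fe M (x - y) * fe M y \<partial>lborel) \<partial>lborel)
     \<le> (\<integral>\<^sup>+x. h x * fe M x \<partial>lborel)^2"
proof -
  have [measurable]: "fe M \<in> borel_measurable borel" by (rule fe_meas[OF D])
  have [measurable]: "h \<in> borel_measurable borel" unfolding h_def by measurable
  have "(\<integral>\<^sup>+x. h x * (\<integral>\<^sup>+y. fe M (x - y) * fe M y \<partial>lborel) \<partial>lborel)
     = (\<integral>\<^sup>+y. fe M y * (\<integral>\<^sup>+z. h (z + y) * fe M z \<partial>lborel) \<partial>lborel)"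
    by (rule swap_conv) auto
  also have "\<dots> \<le> (\<integral>\<^sup>+y. (h y * fe M y) * (\<integral>\<^sup>+z. h z * fe M z \<partial>lborel) \<partial>lborel)"
  proof (intro nn_integral_mono)
    fix y :: real
    show "fe M y * (\<integral>\<^sup>+z. h (z + y) * fe M z \<partial>lborel) \<le> (h y * fe M y) * (\<integral>\<^sup>+z. h z * fe M z \<partial>lborel)"
    proof (cases "0 \<le> y \<and> y \<le> t")
      case True
      have "(\<integral>\<^sup>+z. h (z + y) * fe M z \<partial>lborel) \<le> (\<integral>\<^sup>+z. ennreal (exp (g * y)) * (h z * fe M z) \<partial>lborel)"
      proof (intro nn_integral_mono)
        fix z :: real
        show "h (z + y) * fe M z \<le> ennreal (exp (g * y)) * (h z * fe M z)"
        proof (cases "0 \<le> z \<and> z + y \<le> t")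
          case True
          then have "h (z + y) = ennreal (exp (g * y)) * h z" using \<open>0 \<le> y \<and> y \<le> t\<close>
            by (simp add: h_def distrib_left exp_add ennreal_mult mult.commute)
          then show ?thesis by (simp add: mult.assoc)
        next
          case False
          then have "h (z + y) * fe M z = 0" using \<open>0 \<le> y \<and> y \<le> t\<close>
            by (auto simp: h_def fe_def split: split_indicator)
          then show ?thesis by (simp only:) simp
        qed
      qed
      also have "\<dots> = ennreal (exp (g * y)) * (\<integral>\<^sup>+z. h z * fe M z \<partial>lborel)"
        by (rule nn_integral_cmult) measurable
      finally have "fe M y * (\<integral>\<^sup>+z. h (z + y) * fe M z \<partial>lborel) \<le> fe M y * (ennreal (exp (g * y)) * (\<integral>\<^sup>+z. h z * fe M z \<partial>lborel))"
        by (rule mult_left_mono) simp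
      also have "\<dots> = (h y * fe M y) * (\<integral>\<^sup>+z. h z * fe M z \<partial>lborel)"
        using True by (simp add: h_def mult_ac)
      finally show ?thesis .
    next
      case False
      have "fe M y * (\<integral>\<^sup>+z. h (z + y) * fe M z \<partial>lborel) = 0"
      proof (cases "0 \<le> y")
        case True
        with False have "y > t" by auto
        have "(\<integral>\<^sup>+z. h (z + y) * fe M z \<partial>lborel) = (\<integral>\<^sup>+z. 0 \<partial>(lborel :: real measure))"
          by (rule nn_integral_cong) (use \<open>y > t\<close> in \<open>auto simp: h_def fe_def split: split_indicator\<close>)
        then show ?thesis by simp
      next
        case False then show ?thesis by (simp add: fe_def)
      qed
      then show ?thesis by (simp only:) simp
    qed
  qed
  also have "\<dots> = (\<integral>\<^sup>+y. h y * fe M y \<partial>lborel) * (\<integral>\<^sup>+z. h z * fe M z \<partial>lborel)"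
    by (rule nn_integral_multc) measurable
  finally show ?thesis by (simp add: power2_eq_square)
qed


lemma Ie_neg:
  assumes "x < 0"
  shows "(\<integral>\<^sup>+y. fe M (x - y) * fe M y \<partial>lborel) = 0"
proof -
  have "(\<integral>\<^sup>+y. fe M (x - y) * fe M y \<partial>lborel) = (\<integral>\<^sup>+y. 0 \<partial>(lborel :: real measure))"
    by (rule nn_integral_cong) (use assms in \<open>auto simp: fe_def split: split_indicator\<close>)
  then show ?thesis by simp
qed

lemma split_int:
  fixes u :: "real \<Rightarrow> ennreal"
  assumes [measurable]: "u \<in> borel_measurable borel" and "x0 \<le> t"
  shows "(\<integral>\<^sup>+x. indicator {..t} x * u x \<partial>lborel)
     = (\<integral>\<^sup>+x. indicator {..x0} x * u x \<partial>lborel) + (\<integral>\<^sup>+x. indicator {x0<..t} x * u x \<partial>lborel)"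
proof -
  have "(\<integral>\<^sup>+x. indicator {..t} x * u x \<partial>lborel)
     = (\<integral>\<^sup>+x. indicator {..x0} x * u x + indicator {x0<..t} x * u x \<partial>lborel)"
    by (rule nn_integral_cong) (use assms in \<open>auto split: split_indicator\<close>)
  also have "\<dots> = (\<integral>\<^sup>+x. indicator {..x0} x * u x \<partial>lborel) + (\<integral>\<^sup>+x. indicator {x0<..t} x * u x \<partial>lborel)"
    by (rule nn_integral_add) auto
  finally show ?thesis .
qed

lemma split_int_inf:
  fixes u :: "real \<Rightarrow> ennreal"
  assumes [measurable]: "u \<in> borel_measurable borel"
  shows "(\<integral>\<^sup>+x. u x \<partial>lborel)
     = (\<integral>\<^sup>+x. indicator {..x0} x * u x \<partial>lborel) + (\<integral>\<^sup>+x. indicator {x0<..} x * u x \<partial>lborel)"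
proof -
  have "(\<integral>\<^sup>+x. u x \<partial>lborel)
     = (\<integral>\<^sup>+x. indicator {..x0} x * u x + indicator {x0<..} x * u x \<partial>lborel)"
    by (rule nn_integral_cong) (auto split: split_indicator)
  also have "\<dots> = (\<integral>\<^sup>+x. indicator {..x0} x * u x \<partial>lborel) + (\<integral>\<^sup>+x. indicator {x0<..} x * u x \<partial>lborel)"
    by (rule nn_integral_add) auto
  finally show ?thesis .
qed

lemma sup_int:
  fixes u :: "real \<Rightarrow> ennreal"
  assumes [measurable]: "u \<in> borel_measurable borel"
  shows "(\<integral>\<^sup>+x. u x \<partial>lborel) = (SUP n::nat. (\<integral>\<^sup>+x. indicator {..real n} x * u x \<partial>lborel))"
proof -
  have inc: "incseq (\<lambda>n::nat. \<lambda>x. indicator {..real n} x * u x)"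
    by (auto simp: incseq_def le_fun_def split: split_indicator)
  have pw: "(SUP n::nat. indicator {..real n} x * u x) = u x" for x
  proof (rule antisym)
    show "(SUP n::nat. indicator {..real n} x * u x) \<le> u x"
      by (rule SUP_least) (auto split: split_indicator)
    obtain n :: nat where "x \<le> real n" using real_arch_simple by blast
    then have "u x = indicator {..real n} x * u x" by simp
    also have "\<dots> \<le> (SUP n::nat. indicator {..real n} x * u x)" by (rule SUP_upper) simp
    finally show "u x \<le> (SUP n::nat. indicator {..real n} x * u x)" .
  qed
  have "(\<integral>\<^sup>+x. u x \<partial>lborel) = (\<integral>\<^sup>+x. (SUP n::nat. indicator {..real n} x * u x) \<partial>lborel)"
    by (simp add: pw)
  also have "\<dots> = (SUP n::nat. (\<integral>\<^sup>+x. indicator {..real n} x * u x \<partial>lborel))"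
    by (rule nn_integral_monotone_convergence_SUP[OF inc]) simp
  finally show ?thesis .
qed

lemma Gt_hk:
  assumes D: "distribution_on_nonneg M" and g: "0 \<le> g" and t: "0 \<le> t"
  shows "(\<lambda>x. exp (g * x) * tail M x) integrable_on {0..t}"
    "(\<integral>\<^sup>+x. indicator {..t} x * ennreal (exp (g * x)) * fe M x \<partial>lborel)
       = ennreal (integral {0..t} (\<lambda>x. exp (g * x) * tail M x))"
proof -
  have [measurable]: "tail M \<in> borel_measurable borel" by (rule tail_meas[OF D])
  have bd: "exp (g * x) * tail M x \<le> exp (g * t)" if "x \<in> {0..t}" for x
  proof -
    have "exp (g * x) * tail M x \<le> exp (g * x) * 1"
      by (rule mult_left_mono) (auto simp: tail_basic[OF D])
    also have "\<dots> \<le> exp (g * t)" using that g by (auto intro: mult_left_mono)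
    finally show ?thesis .
  qed
  show "(\<lambda>x. exp (g * x) * tail M x) integrable_on {0..t}"
    by (rule bounded_hk_nn(1)[where B="exp (g * t)"]) (use bd in \<open>auto simp: tail_basic[OF D]\<close>)
  have "(\<integral>\<^sup>+x. ennreal (indicator {0..t} x * (exp (g * x) * tail M x)) \<partial>lborel)
       = ennreal (integral {0..t} (\<lambda>x. exp (g * x) * tail M x))"
    by (rule bounded_hk_nn(2)[where B="exp (g * t)"]) (use bd in \<open>auto simp: tail_basic[OF D]\<close>)
  moreover have "(\<integral>\<^sup>+x. indicator {..t} x * ennreal (exp (g * x)) * fe M x \<partial>lborel)
     = (\<integral>\<^sup>+x. ennreal (indicator {0..t} x * (exp (g * x) * tail M x)) \<partial>lborel)"
    by (rule nn_integral_cong) (auto simp: fe_def ennreal_mult tail_basic[OF D] split: split_indicator)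
  ultimately show "(\<integral>\<^sup>+x. indicator {..t} x * ennreal (exp (g * x)) * fe M x \<partial>lborel)
       = ennreal (integral {0..t} (\<lambda>x. exp (g * x) * tail M x))" by simp
qed


lemma equiv_bounds:
  fixes F f :: "real \<Rightarrow> real"
  assumes E: "F \<sim>[at_top] (\<lambda>x. c * f x)" and pos: "\<And>x. f x > 0" and c: "c > 0" and e: "e > 0"
  shows "eventually (\<lambda>x. (c - e) * f x \<le> F x \<and> F x \<le> (c + e) * f x) at_top"
proof -
  have "((\<lambda>x. if F x = 0 \<and> c * f x = 0 then 1 else F x / (c * f x)) \<longlongrightarrow> 1) at_top"
    using asymp_equivD[OF E] .
  moreover have "\<And>x. (if F x = 0 \<and> c * f x = 0 then 1 else F x / (c * f x)) = F x / (c * f x)"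
  proof -
    fix x have "f x \<noteq> 0" "c \<noteq> 0" using pos[of x] c by auto
    then show "(if F x = 0 \<and> c * f x = 0 then 1 else F x / (c * f x)) = F x / (c * f x)" by simp
  qed
  ultimately have T: "((\<lambda>x. F x / (c * f x)) \<longlongrightarrow> 1) at_top" by simp
  have "eventually (\<lambda>x. dist (F x / (c * f x)) 1 < e / c) at_top"
    by (rule tendstoD[OF T]) (use c e in simp)
  then show ?thesis
  proof (rule eventually_mono)
    fix x assume a: "dist (F x / (c * f x)) 1 < e / c"
    define q where "q = F x / (c * f x)"
    have cf: "c * f x > 0" using pos c by simp
    have cf0: "c * f x \<noteq> 0" using cf by (metis less_irrefl)
    have Fq: "F x = q * (c * f x)" unfolding q_def using cf0 by (simp del: mult_eq_0_iff)
    have "\<bar>q - 1\<bar> < e / c" using a by (simp add: q_def dist_real_def)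
    then have "\<bar>q - 1\<bar> * c < e" using c by (simp add: pos_less_divide_eq)
    then have b: "\<bar>(q - 1) * c\<bar> < e" using c by (simp add: abs_mult)
    have "F x - c * f x = ((q - 1) * c) * f x" using Fq by (simp add: algebra_simps)
    then have "\<bar>F x - c * f x\<bar> \<le> e * f x"
      using b pos[of x] by (simp add: abs_mult less_imp_le mult_right_mono)
    then show "(c - e) * f x \<le> F x \<and> F x \<le> (c + e) * f x"
      by (auto simp: algebra_simps abs_le_iff)
  qed
qed

lemma lower_I:
  assumes D: "distribution_on_nonneg M" and x: "0 \<le> x"
  shows "ennreal (tail M x) * (\<integral>\<^sup>+y. indicator {..x} y * fe M y \<partial>lborel) \<le> ennreal (tail_conv M x)"
proof -
  have [measurable]: "fe M \<in> borel_measurable borel" by (rule fe_meas[OF D])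
  have "ennreal (tail M x) * (\<integral>\<^sup>+y. indicator {..x} y * fe M y \<partial>lborel)
     = (\<integral>\<^sup>+y. ennreal (tail M x) * (indicator {..x} y * fe M y) \<partial>lborel)"
    by (rule nn_integral_cmult[symmetric]) measurable
  also have "\<dots> \<le> (\<integral>\<^sup>+y. fe M (x - y) * fe M y \<partial>lborel)"
  proof (rule nn_integral_mono)
    fix y :: real
    show "ennreal (tail M x) * (indicator {..x} y * fe M y) \<le> fe M (x - y) * fe M y"
    proof (cases "0 \<le> y \<and> y \<le> x")
      case True
      then have "fe M (x - y) = ennreal (tail M (x - y))" by (simp add: fe_def)
      moreover have "tail M x \<le> tail M (x - y)" using True by (intro tail_basic(3)[OF D]) auto
      ultimately have "ennreal (tail M x) \<le> fe M (x - y)" by (simp add: tail_basic[OF D])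
      then show ?thesis using True by (simp add: mult_right_mono)
    next
      case False then show ?thesis by (auto simp: fe_def split: split_indicator)
    qed
  qed
  also have "\<dots> = ennreal (tail_conv M x)" using I_eq[OF D x] by simp
  finally show ?thesis .
qed

lemma finite_mean:
  assumes D: "distribution_on_nonneg M" and pos: "\<And>x. tail M x > 0" and c: "0 < c"
    and E: "tail_conv M \<sim>[at_top] (\<lambda>x. c * tail M x)"
  shows "(\<integral>\<^sup>+x. fe M x \<partial>lborel) \<le> ennreal (c + 1)"
proof -
  have [measurable]: "fe M \<in> borel_measurable borel" by (rule fe_meas[OF D])
  obtain X where X: "\<And>x. x \<ge> X \<Longrightarrow> (c - 1) * tail M x \<le> tail_conv M x \<and> tail_conv M x \<le> (c + 1) * tail M x"
    using equiv_bounds[OF E pos c, of 1] by (auto simp: eventually_at_top_linorder)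
  have P: "(\<integral>\<^sup>+y. indicator {..x} y * fe M y \<partial>lborel) \<le> ennreal (c + 1)" if x: "x \<ge> max X 0" for x
  proof -
    have "ennreal (tail M x) * (\<integral>\<^sup>+y. indicator {..x} y * fe M y \<partial>lborel) \<le> ennreal (tail_conv M x)"
      using lower_I[OF D] x by simp
    also have "\<dots> \<le> ennreal ((c + 1) * tail M x)" by (intro ennreal_leI) (use X[of x] x in auto)
    also have "\<dots> = ennreal (tail M x) * ennreal (c + 1)"
      using c pos[of x] by (simp add: ennreal_mult mult.commute)
    finally show ?thesis
      using pos[of x] by (subst (asm) ennreal_mult_le_mult_iff) auto
  qed
  have "(\<integral>\<^sup>+x. fe M x \<partial>lborel) = (SUP n::nat. (\<integral>\<^sup>+x. indicator {..real n} x * fe M x \<partial>lborel))"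
    by (rule sup_int) measurable
  also have "\<dots> \<le> ennreal (c + 1)"
  proof (rule SUP_least)
    fix n :: nat
    obtain m :: nat where m: "max X 0 \<le> real m" using real_arch_simple by blast
    have "(\<integral>\<^sup>+x. indicator {..real n} x * fe M x \<partial>lborel) \<le> (\<integral>\<^sup>+x. indicator {..real (max n m)} x * fe M x \<partial>lborel)"
      by (intro nn_integral_mono) (auto split: split_indicator intro: mult_right_mono)
    also have "\<dots> \<le> ennreal (c + 1)" by (rule P) (use m in auto)
    finally show "(\<integral>\<^sup>+x. indicator {..real n} x * fe M x \<partial>lborel) \<le> ennreal (c + 1)" .
  qed
  finally show ?thesis .
qed


lemma core:
  assumes D: "distribution_on_nonneg M" and pos: "\<And>x. tail M x > 0" and H: "heavy_tailed M"
    and e: "0 < e" "e < c" and x0: "0 \<le> x0"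
    and B: "\<And>x. x \<ge> x0 \<Longrightarrow> (c - e) * tail M x \<le> tail_conv M x \<and> tail_conv M x \<le> (c + e) * tail M x"
    and fin: "(\<integral>\<^sup>+x. fe M x \<partial>lborel) < \<infinity>"
  defines "a \<equiv> enn2real (\<integral>\<^sup>+x. fe M x \<partial>lborel)"
    and "ax0 \<equiv> enn2real (\<integral>\<^sup>+x. indicator {..x0} x * fe M x \<partial>lborel)"
  shows "\<exists>k0. a\<^sup>2 \<le> k0 + (c + e) * (a - ax0) \<and> (\<forall>v > ax0. v\<^sup>2 \<ge> k0 + (c - e) * (v - ax0))"
proof -
  have [measurable]: "fe M \<in> borel_measurable borel" by (rule fe_meas[OF D])
  have [measurable]: "tail M \<in> borel_measurable borel" by (rule tail_meas[OF D])
  define Ie where "Ie x = (\<integral>\<^sup>+y. fe M (x - y) * fe M y \<partial>lborel)" for x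
  have [measurable]: "Ie \<in> borel_measurable borel" unfolding Ie_def by measurable
  define A where "A = (\<integral>\<^sup>+x. fe M x \<partial>lborel)"
  define Px0 where "Px0 = (\<integral>\<^sup>+x. indicator {..x0} x * fe M x \<partial>lborel)"
  define R where "R = (\<integral>\<^sup>+x. indicator {x0<..} x * fe M x \<partial>lborel)"
  define K0 where "K0 = (\<integral>\<^sup>+x. indicator {..x0} x * Ie x \<partial>lborel)"
  have AR: "A = Px0 + R" unfolding A_def Px0_def R_def by (rule split_int_inf) measurable
  have Afin: "A < \<infinity>" using fin by (simp add: A_def)
  then have Pfin: "Px0 < \<infinity>" and Rfin: "R < \<infinity>" using AR by (auto simp: top_unique)
  have A2: "A ^ 2 = (\<integral>\<^sup>+x. Ie x \<partial>lborel)" unfolding A_def Ie_def by (rule conv_total[OF D, symmetric])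
  also have "\<dots> = K0 + (\<integral>\<^sup>+x. indicator {x0<..} x * Ie x \<partial>lborel)"
    unfolding K0_def by (rule split_int_inf) measurable
  finally have A2split: "A ^ 2 = K0 + (\<integral>\<^sup>+x. indicator {x0<..} x * Ie x \<partial>lborel)" .
  have K0fin: "K0 < \<infinity>"
  proof -
    have "K0 \<le> A ^ 2" using A2split by simp
    also have "\<dots> < \<infinity>" using Afin by (simp add: power_less_top_ennreal)
    finally show ?thesis .
  qed
  define k0 where "k0 = enn2real K0"
  define r where "r = enn2real R"
  have k0e: "K0 = ennreal k0" and k0nn: "0 \<le> k0" using K0fin by (auto simp: k0_def)
  have re: "R = ennreal r" and rnn: "0 \<le> r" using Rfin by (auto simp: r_def)
  have ae: "Px0 = ennreal ax0" and axnn: "0 \<le> ax0" using Pfin by (auto simp: ax0_def Px0_def)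
  have Ae: "A = ennreal a" and ann: "0 \<le> a" using Afin by (auto simp: a_def A_def)
  have a_split: "a = ax0 + r"
  proof -
    have "ennreal a = ennreal (ax0 + r)" using AR Ae ae re axnn rnn by (simp add: ennreal_plus)
    then show ?thesis using ann axnn rnn by (subst (asm) ennreal_inj) auto
  qed
  have "(\<integral>\<^sup>+x. indicator {x0<..} x * Ie x \<partial>lborel) \<le> (\<integral>\<^sup>+x. ennreal (c + e) * (indicator {x0<..} x * fe M x) \<partial>lborel)"
  proof (rule nn_integral_mono)
    fix x :: real
    show "indicator {x0<..} x * Ie x \<le> ennreal (c + e) * (indicator {x0<..} x * fe M x)"
    proof (cases "x0 < x")
      case True
      then have x: "0 \<le> x" using x0 by simp
      have "Ie x = ennreal (tail_conv M x)" using I_eq[OF D x] by (simp add: Ie_def)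
      also have "\<dots> \<le> ennreal ((c + e) * tail M x)" by (intro ennreal_leI) (use B[of x] True in auto)
      also have "\<dots> = ennreal (c + e) * fe M x" using x e by (simp add: fe_def ennreal_mult tail_basic[OF D])
      finally show ?thesis using True by simp
    qed simp
  qed
  also have "\<dots> = ennreal (c + e) * R" unfolding R_def by (rule nn_integral_cmult) measurable
  finally have "A ^ 2 \<le> K0 + ennreal (c + e) * R" using A2split by (simp add: add_left_mono)
  then have "ennreal (a ^ 2) \<le> ennreal (k0 + (c + e) * r)"
    using ann k0nn rnn e by (simp add: Ae k0e re ennreal_power ennreal_mult ennreal_plus)
  then have stepb: "a\<^sup>2 \<le> k0 + (c + e) * (a - ax0)" using a_split k0nn rnn e 
    by (subst (asm) ennreal_le_iff) auto
  define GR where "GR g t = integral {0..t} (\<lambda>x. exp (g * x) * tail M x)" for g t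
  define Gt where "Gt g t = (\<integral>\<^sup>+x. indicator {..t} x * ennreal (exp (g * x)) * fe M x \<partial>lborel)" for g t
  have Gt_eq: "Gt g t = ennreal (GR g t)" if "0 \<le> g" "0 \<le> t" for g t
    unfolding Gt_def GR_def by (rule Gt_hk(2)[OF D that])
  have GR_nn: "0 \<le> GR g t" if "0 \<le> g" "0 \<le> t" for g t
    unfolding GR_def by (rule integral_nonneg[OF Gt_hk(1)[OF D that]]) (auto simp: tail_basic[OF D])
  have stepa: "k0 + (c - e) * (GR g t - GR g x0) \<le> (GR g t)\<^sup>2" if g: "0 < g" and t: "x0 \<le> t" for g t
  proof -
    have t0: "0 \<le> t" using t x0 by simp
    have cb: "(\<integral>\<^sup>+x. indicator {..t} x * ennreal (exp (g * x)) * Ie x \<partial>lborel) \<le> (Gt g t)^2"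
      using conv_bound[OF D, of g t] g by (simp add: Ie_def Gt_def)
    define Q where "Q = (\<integral>\<^sup>+x. indicator {x0<..t} x * (ennreal (exp (g * x)) * fe M x) \<partial>lborel)"
    have "K0 + ennreal (c - e) * Q = (\<integral>\<^sup>+x. indicator {..x0} x * Ie x + ennreal (c - e) * (indicator {x0<..t} x * (ennreal (exp (g * x)) * fe M x)) \<partial>lborel)"
      unfolding K0_def Q_def by (subst nn_integral_add) (auto simp: nn_integral_cmult)
    also have "\<dots> \<le> (\<integral>\<^sup>+x. indicator {..t} x * ennreal (exp (g * x)) * Ie x \<partial>lborel)"
    proof (rule nn_integral_mono)
      fix x :: real
      show "indicator {..x0} x * Ie x + ennreal (c - e) * (indicator {x0<..t} x * (ennreal (exp (g * x)) * fe M x))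
          \<le> indicator {..t} x * ennreal (exp (g * x)) * Ie x"
      proof (cases "x < 0")
        case True
        then have "Ie x = 0" unfolding Ie_def by (rule Ie_neg)
        then show ?thesis using True x0 by (simp split: split_indicator)
      next
        case False
        then have x: "0 \<le> x" by simp
        have IeI: "Ie x = ennreal (tail_conv M x)" using I_eq[OF D x] by (simp add: Ie_def)
        show ?thesis
        proof (cases "x \<le> x0")
          case True
          have "exp (g * x) \<ge> 1" using g x by simp
          then have "ennreal 1 \<le> ennreal (exp (g * x))" by (rule ennreal_leI)
          then have "1 \<le> ennreal (exp (g * x))" by simp
          then have "Ie x \<le> ennreal (exp (g * x)) * Ie x" by (metis mult_1 mult_right_mono zero_le)
          then show ?thesis using True t by (simp add: split: split_indicator)
        next
          case False
          show ?thesis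
          proof (cases "x \<le> t")
            case True
            have "ennreal (c - e) * (ennreal (exp (g * x)) * fe M x) = ennreal (exp (g * x)) * ennreal ((c - e) * tail M x)"
              using x e by (simp add: fe_def ennreal_mult tail_basic[OF D] mult_ac)
            also have "\<dots> \<le> ennreal (exp (g * x)) * Ie x"
              unfolding IeI by (intro mult_left_mono ennreal_leI) (use B[of x] False in auto)
            finally show ?thesis using True False by (simp add: split: split_indicator)
          qed (use False in simp)
        qed
      qed
    qed
    also have "\<dots> \<le> (Gt g t)^2" by (rule cb)
    finally have ineq: "K0 + ennreal (c - e) * Q \<le> (Gt g t)^2" .
    have "Gt g t = Gt g x0 + Q" unfolding Gt_def Q_def
      using split_int[of "\<lambda>x. ennreal (exp (g * x)) * fe M x" x0 t] t by (simp add: mult.assoc)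
    then have GQ: "ennreal (GR g t) = ennreal (GR g x0) + Q" using Gt_eq g t0 x0 by simp
    then have "Q \<le> ennreal (GR g t)" by simp
    then have Qfin: "Q < \<infinity>" using ennreal_less_top[of "GR g t"] by (simp add: le_less_trans)
    define q where "q = enn2real Q"
    have Qe: "Q = ennreal q" and qnn: "0 \<le> q" using Qfin by (auto simp: q_def)
    have pl: "ennreal (GR g x0 + q) = ennreal (GR g x0) + ennreal q"
      by (rule ennreal_plus) (use GR_nn[of g x0] g x0 qnn in auto)
    have "ennreal (GR g t) = ennreal (GR g x0 + q)" using GQ unfolding Qe pl .
    then have Gsplit: "GR g t = GR g x0 + q"
      using GR_nn[of g t] GR_nn[of g x0] g t0 x0 qnn by (subst (asm) ennreal_inj) auto
    have "ennreal (k0 + (c - e) * q) \<le> ennreal ((GR g t)\<^sup>2)"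
      using ineq k0nn qnn e GR_nn[of g t] g t0 
      by (simp add: k0e Qe Gt_eq ennreal_power ennreal_mult ennreal_plus)
    then have "k0 + (c - e) * q \<le> (GR g t)\<^sup>2" by (subst (asm) ennreal_le_iff) auto
    then show ?thesis using Gsplit by simp
  qed
  have stepc: "GR g x0 \<le> exp (g * x0) * ax0" if g: "0 < g" for g
  proof -
    have "ennreal (GR g x0) = Gt g x0" using Gt_eq[of g x0] g x0 by simp
    also have "\<dots> \<le> (\<integral>\<^sup>+x. ennreal (exp (g * x0)) * (indicator {..x0} x * fe M x) \<partial>lborel)"
      unfolding Gt_def
    proof (rule nn_integral_mono)
      fix x :: real
      show "indicator {..x0} x * ennreal (exp (g * x)) * fe M x \<le> ennreal (exp (g * x0)) * (indicator {..x0} x * fe M x)"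
      proof (cases "x \<le> x0")
        case True
        then have "ennreal (exp (g * x)) \<le> ennreal (exp (g * x0))" using g by (intro ennreal_leI) simp
        then show ?thesis using True by (simp add: mult_right_mono)
      qed simp
    qed
    also have "\<dots> = ennreal (exp (g * x0)) * Px0" unfolding Px0_def by (rule nn_integral_cmult) measurable
    also have "\<dots> = ennreal (exp (g * x0) * ax0)" using axnn by (simp add: ae ennreal_mult)
    finally show ?thesis using axnn by (subst (asm) ennreal_le_iff) auto
  qed
  have stepd: "\<exists>t\<ge>x0. w \<le> GR g t" if g: "0 < g" for g w
  proof -
    have "(\<integral>\<^sup>+ x. ennreal (exp (g * x)) \<partial>M) = \<infinity>" using H g by (simp add: heavy_tailed_def)
    from heavy_int[OF D g this]
    have inf: "(\<integral>\<^sup>+x. ennreal (exp (g * x)) * fe M x \<partial>lborel) = \<infinity>"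
      by (simp add: fe_def ennreal_mult tail_basic[OF D] mult_ac)
    have sup: "(\<integral>\<^sup>+x. ennreal (exp (g * x)) * fe M x \<partial>lborel) = (SUP n::nat. (\<integral>\<^sup>+x. indicator {..real n} x * (ennreal (exp (g * x)) * fe M x) \<partial>lborel))"
      by (rule sup_int) measurable
    have "ennreal w < (SUP n::nat. (\<integral>\<^sup>+x. indicator {..real n} x * (ennreal (exp (g * x)) * fe M x) \<partial>lborel))"
      using inf sup by (metis ennreal_less_top infinity_ennreal_def)
    then obtain n :: nat where n: "ennreal w < (\<integral>\<^sup>+x. indicator {..real n} x * (ennreal (exp (g * x)) * fe M x) \<partial>lborel)"
      by (auto simp: less_SUP_iff)
    define t where "t = max (real n) x0"
    have t0: "0 \<le> t" using x0 by (simp add: t_def)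
    have "(\<integral>\<^sup>+x. indicator {..real n} x * (ennreal (exp (g * x)) * fe M x) \<partial>lborel) \<le> Gt g t"
      unfolding Gt_def by (intro nn_integral_mono) (auto simp: t_def split: split_indicator)
    also have "\<dots> = ennreal (GR g t)" using Gt_eq[of g t] g t0 by simp
    finally have "ennreal w < ennreal (GR g t)" using n by simp
    then have "w \<le> GR g t" by (cases "w \<le> 0") (use GR_nn[of g t] g t0 in \<open>auto simp: ennreal_less_iff\<close>)
    then show ?thesis by (intro exI[of _ t]) (simp add: t_def)
  qed
  have ivt: "\<exists>t\<ge>x0. GR g t = v" if g: "0 < g" and v: "GR g x0 \<le> v" for g v
  proof -
    obtain T where T: "x0 \<le> T" "v \<le> GR g T" using stepd[OF g, of v] by blast
    have "continuous_on {0..T} (\<lambda>t. integral {0..t} (\<lambda>x. exp (g * x) * tail M x))"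
      by (rule indefinite_integral_continuous_1[OF Gt_hk(1)[OF D]]) (use g T x0 in auto)
    then have "continuous_on {x0..T} (GR g)" unfolding GR_def
      by (rule continuous_on_subset) (use x0 in auto)
    then obtain t where "x0 \<le> t" "t \<le> T" "GR g t = v" using IVT'[of "GR g" x0 v T] v T by auto
    then show ?thesis by blast
  qed
  have stepe: "k0 + (c - e) * (v - ax0) \<le> v\<^sup>2" if v: "ax0 < v" for v
  proof (rule ccontr)
    assume na: "\<not> (k0 + (c - e) * (v - ax0) \<le> v\<^sup>2)"
    define d where "d = k0 + (c - e) * (v - ax0) - v\<^sup>2"
    have d: "0 < d" using na by (simp add: d_def)
    define d1 where "d1 = (v - ax0) / (ax0 + 1)"
    define d2 where "d2 = d / ((c - e) * ax0 + 1)"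
    have ce: "0 \<le> c - e" using e by simp
    have d1p: "0 < d1" using v axnn by (simp add: d1_def)
    have den: "0 < (c - e) * ax0 + 1" using ce axnn by (simp add: add_nonneg_pos)
    have d2p: "0 < d2" using d den by (simp add: d2_def)
    have d1e: "d1 * (ax0 + 1) = v - ax0" using axnn by (simp add: d1_def)
    have d2e: "d2 * ((c - e) * ax0 + 1) = d" using den by (simp add: d2_def)
    define \<delta> where "\<delta> = min d1 d2"
    have dp: "0 < \<delta>" using d1p d2p by (simp add: \<delta>_def)
    define g where "g = ln (1 + \<delta>) / (x0 + 1)"
    have lnp: "0 < ln (1 + \<delta>)" using dp by simp
    have g: "0 < g" using lnp x0 by (simp add: g_def)
    have "g * x0 = ln (1 + \<delta>) * (x0 / (x0 + 1))" by (simp add: g_def)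
    also have "\<dots> \<le> ln (1 + \<delta>) * 1" using lnp x0 by (intro mult_left_mono) auto
    finally have "exp (g * x0) \<le> exp (ln (1 + \<delta>))" by simp
    then have E: "exp (g * x0) \<le> 1 + \<delta>" using dp by simp
    have "GR g x0 \<le> exp (g * x0) * ax0" by (rule stepc[OF g])
    also have "\<dots> \<le> (1 + \<delta>) * ax0" using E axnn by (rule mult_right_mono)
    finally have G1: "GR g x0 \<le> ax0 + \<delta> * ax0" by (simp add: algebra_simps)
    have "\<delta> * ax0 \<le> d1 * ax0" using axnn by (intro mult_right_mono) (auto simp: \<delta>_def)
    also have "\<dots> < v - ax0" using d1e d1p by (simp add: algebra_simps)
    finally have "GR g x0 \<le> v" using G1 by simp
    then obtain t where t: "x0 \<le> t" "GR g t = v" using ivt[OF g] by blast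
    have A1: "k0 + (c - e) * (v - GR g x0) \<le> v\<^sup>2" using stepa[OF g t(1)] t(2) by simp
    have "(c - e) * (v - ax0) - (c - e) * (\<delta> * ax0) \<le> (c - e) * (v - GR g x0)"
      using G1 ce by (simp add: right_diff_distrib[symmetric] mult_left_mono)
    moreover have "(c - e) * (\<delta> * ax0) \<le> (c - e) * (d2 * ax0)"
      using axnn ce by (intro mult_left_mono mult_right_mono) (auto simp: \<delta>_def)
    moreover have "(c - e) * (d2 * ax0) < d" using d2e d2p by (simp add: algebra_simps)
    ultimately show False using A1 by (simp add: d_def)
  qed
  show ?thesis using stepb stepe by blast
qed


lemma arith_final:
  fixes a c :: real and ax :: "real \<Rightarrow> real"
  assumes c: "0 < c" and axnn: "\<And>x. 0 \<le> ax x" and axa: "\<And>x. ax x < a"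
    and conv: "\<And>d. 0 < d \<Longrightarrow> \<exists>X. \<forall>x\<ge>X. a - ax x < d"
    and H: "\<And>e. 0 < e \<Longrightarrow> e < c \<Longrightarrow> \<exists>X. \<forall>x0\<ge>X. \<forall>v > ax x0.
               a\<^sup>2 - (c + e) * (a - ax x0) + (c - e) * (v - ax x0) \<le> v\<^sup>2"
  shows "c = 2 * a"
proof (rule ccontr)
  assume ne: "c \<noteq> 2 * a"
  have a: "0 \<le> a" using axnn[of 0] axa[of 0] by simp
  show False
  proof (cases "c > 2 * a")
    case True
    define e where "e = min (c / 2) ((c / 2 - a)\<^sup>2 / (2 * (a + c / 2)))"
    have sq: "0 < (c / 2 - a)\<^sup>2" using True by simp
    have ap: "0 < a + c / 2" using a c by simp
    have e0: "0 < e" using sq ap c by (simp add: e_def)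
    have ec: "e < c" using c by (simp add: e_def)
    have e2: "e * (a + c / 2) \<le> (c / 2 - a)\<^sup>2 / 2"
    proof -
      have "e * (a + c / 2) \<le> ((c / 2 - a)\<^sup>2 / (2 * (a + c / 2))) * (a + c / 2)"
        using ap by (intro mult_right_mono) (auto simp: e_def)
      also have "\<dots> = (c / 2 - a)\<^sup>2 / 2" using ap by (simp add: field_simps)
      finally show ?thesis .
    qed
    obtain X where X: "\<forall>x0\<ge>X. \<forall>v > ax x0. a\<^sup>2 - (c + e) * (a - ax x0) + (c - e) * (v - ax x0) \<le> v\<^sup>2"
      using H[OF e0 ec] by blast
    have v: "ax X < c / 2" using axa[of X] True by simp
    have I: "a\<^sup>2 - (c + e) * (a - ax X) + (c - e) * (c / 2 - ax X) \<le> (c / 2)\<^sup>2"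
      using X v by auto
    have "a\<^sup>2 - (c + e) * (a - ax X) + (c - e) * (c / 2 - ax X) = (c/2)\<^sup>2 + (c / 2 - a)\<^sup>2 - e * (a + c / 2 - 2 * ax X)"
      by (simp add: field_simps power2_eq_square)
    then have "(c / 2 - a)\<^sup>2 \<le> e * (a + c / 2 - 2 * ax X)" using I by simp
    also have "\<dots> \<le> e * (a + c / 2)" using e0 axnn[of X] by (intro mult_left_mono) auto
    finally show False using e2 sq by simp
  next
    case False
    with ne have lt: "c < 2 * a" by simp
    define e where "e = min (c / 2) ((2 * a - c) / 6)"
    have e0: "0 < e" using c lt by (simp add: e_def)
    have ec: "e < c" using c by (simp add: e_def)
    have e6: "e \<le> (2 * a - c) / 6" unfolding e_def by (rule min.cobounded2)
    obtain X where X: "\<forall>x0\<ge>X. \<forall>v > ax x0. a\<^sup>2 - (c + e) * (a - ax x0) + (c - e) * (v - ax x0) \<le> v\<^sup>2"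
      using H[OF e0 ec] by blast
    obtain Y where Y: "\<forall>x\<ge>Y. a - ax x < (2 * a - c) / 2" using conv[of "(2 * a - c) / 2"] lt by auto
    define x0 where "x0 = max X Y"
    define dd where "dd = a - ax x0"
    have dd0: "0 < dd" using axa[of x0] by (simp add: dd_def)
    have ddl: "dd < (2 * a - c) / 2" using Y by (simp add: dd_def x0_def)
    define v where "v = a - dd / 2"
    have "v > ax x0" using dd0 unfolding v_def dd_def by (simp add: field_simps)
    then have I0: "a\<^sup>2 - (c + e) * (a - ax x0) + (c - e) * (v - ax x0) \<le> v\<^sup>2"
      using X by (simp add: x0_def)
    have vd: "v - ax x0 = dd / 2" by (simp add: v_def dd_def field_simps)
    have I: "a\<^sup>2 - (c + e) * dd + (c - e) * (dd / 2) \<le> v\<^sup>2"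
      using I0 unfolding vd dd_def[symmetric] .
    have "v\<^sup>2 - (a\<^sup>2 - (c + e) * dd + (c - e) * (dd / 2)) = dd * (dd / 4 - a + c / 2 + 3 * e / 2)"
      by (simp add: v_def field_simps power2_eq_square)
    then have "0 \<le> dd * (dd / 4 - a + c / 2 + 3 * e / 2)" using I by simp
    then have "0 \<le> dd / 4 - a + c / 2 + 3 * e / 2" using dd0 by (simp add: zero_le_mult_iff)
    then show False using ddl e6 lt by argo
  qed
qed


lemma R_pos:
  assumes D: "distribution_on_nonneg M" and pos: "\<And>x. tail M x > 0"
  shows "0 < (\<integral>\<^sup>+y. indicator {x<..} y * fe M y \<partial>lborel)"
proof -
  have [measurable]: "fe M \<in> borel_measurable borel" by (rule fe_meas[OF D])
  define m where "m = max x 0"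
  have "0 < ennreal (tail M (m + 1))" using pos by simp
  also have "\<dots> = (\<integral>\<^sup>+y. ennreal (tail M (m + 1)) * indicator {m<..m+1} y \<partial>lborel)"
    by (subst nn_integral_cmult_indicator) auto
  also have "\<dots> \<le> (\<integral>\<^sup>+y. indicator {x<..} y * fe M y \<partial>lborel)"
  proof (rule nn_integral_mono)
    fix y :: real
    show "ennreal (tail M (m + 1)) * indicator {m<..m+1} y \<le> indicator {x<..} y * fe M y"
    proof (cases "m < y \<and> y \<le> m + 1")
      case True
      then have "tail M (m + 1) \<le> tail M y" by (intro tail_basic(3)[OF D]) auto
      then show ?thesis using True by (auto simp: m_def fe_def tail_basic[OF D])
    qed auto
  qed
  finally show ?thesis .
qed

theorem theorem5:
  fixes M :: "real measure" and c :: real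
  assumes "distribution_on_nonneg M"
    and "\<And>x. tail M x > 0"
    and "heavy_tailed M"
    and "0 < c"
    and "tail_conv M \<sim>[at_top] (\<lambda>x. c * tail M x)"
  shows "integrable M (\<lambda>x. x) \<and>
         tail_conv M \<sim>[at_top] (\<lambda>x. 2 * (\<integral>y. y \<partial>M) * tail M x)"
proof -
  note D = assms(1) and pos = assms(2) and H = assms(3) and c = assms(4) and E = assms(5)
  interpret prob_space M using D by (simp add: distribution_on_nonneg_def)
  have S[measurable_cong]: "sets M = sets borel" using D by (simp add: distribution_on_nonneg_def)
  have [measurable]: "fe M \<in> borel_measurable borel" by (rule fe_meas[OF D])
  define A where "A = (\<integral>\<^sup>+x. fe M x \<partial>lborel)"
  define a where "a = enn2real A"
  have Afin: "A < \<infinity>" unfolding A_def using finite_mean[OF D pos c E]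
    using ennreal_less_top[of "c + 1"] by (simp add: le_less_trans)
  have AE0: "AE x in M. 0 \<le> x"
  proof -
    have "prob {0..} = 1" using D by (simp add: distribution_on_nonneg_def)
    then have "AE x in M. x \<in> {0..}" by (rule AE_prob_1)
    then show ?thesis by simp
  qed
  have me: "(\<integral>\<^sup>+x. ennreal x \<partial>M) = A" unfolding A_def using mean_eq[OF D] by (simp add: fe_def[abs_def])
  have int: "integrable M (\<lambda>x. x)"
    by (rule integrableI_nonneg) (use AE0 me Afin in auto)
  have mean: "(\<integral>y. y \<partial>M) = a"
    using integral_eq_nn_integral[of "\<lambda>x. x" M] AE0 me by (simp add: a_def)
  define ax where "ax x = enn2real (\<integral>\<^sup>+y. indicator {..x} y * fe M y \<partial>lborel)" for x
  have Px: "A = (\<integral>\<^sup>+y. indicator {..x} y * fe M y \<partial>lborel) + (\<integral>\<^sup>+y. indicator {x<..} y * fe M y \<partial>lborel)" for x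
    unfolding A_def by (rule split_int_inf) measurable
  have Pfin: "(\<integral>\<^sup>+y. indicator {..x} y * fe M y \<partial>lborel) < \<infinity>" for x
    using Px[of x] Afin by (metis le_iff_add le_less_trans)
  have Pe: "(\<integral>\<^sup>+y. indicator {..x} y * fe M y \<partial>lborel) = ennreal (ax x)" for x
    using Pfin[of x] by (simp add: ax_def)
  have Ae: "A = ennreal a" using Afin by (simp add: a_def)
  have axnn: "0 \<le> ax x" for x by (simp add: ax_def)
  have axa: "ax x < a" for x
  proof -
    have "ennreal (ax x) < ennreal (ax x) + (\<integral>\<^sup>+y. indicator {x<..} y * fe M y \<partial>lborel)"
      using R_pos[OF D pos, of x] by (simp add: ennreal_less_top)
    also have "\<dots> = ennreal a" using Px[of x] Pe[of x] Ae by simp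
    finally show ?thesis using ennreal_less_iff[OF axnn[of x]] by simp
  qed
  have conv: "\<exists>X. \<forall>x\<ge>X. a - ax x < d" if d: "0 < d" for d
  proof (cases "a - d < 0")
    case True
    have "a - ax x < d" for x using axnn[of x] True by linarith
    then show ?thesis by blast
  next
    case False
    have "A = (SUP n::nat. (\<integral>\<^sup>+x. indicator {..real n} x * fe M x \<partial>lborel))"
      unfolding A_def by (rule sup_int) measurable
    moreover have "ennreal (a - d) < A" using Ae d False by (simp add: ennreal_lessI)
    ultimately obtain n :: nat where n: "ennreal (a - d) < (\<integral>\<^sup>+x. indicator {..real n} x * fe M x \<partial>lborel)"
      by (auto simp: less_SUP_iff)
    show ?thesis
    proof (intro exI[of _ "real n"] allI impI)
      fix x assume x: "real n \<le> x"
      have "(\<integral>\<^sup>+x. indicator {..real n} x * fe M x \<partial>lborel) \<le> (\<integral>\<^sup>+y. indicator {..x} y * fe M y \<partial>lborel)"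
        using x by (intro nn_integral_mono) (auto split: split_indicator)
      then have "ennreal (a - d) < ennreal (ax x)" using n Pe[of x] by simp
      then have "a - d < ax x" using axnn[of x] False by (subst (asm) ennreal_less_iff) auto
      then show "a - ax x < d" by simp
    qed
  qed
  have Hyp: "\<exists>X. \<forall>x0\<ge>X. \<forall>v > ax x0. a\<^sup>2 - (c + e) * (a - ax x0) + (c - e) * (v - ax x0) \<le> v\<^sup>2"
    if e: "0 < e" "e < c" for e
  proof -
    obtain X where X: "\<And>x. x \<ge> X \<Longrightarrow> (c - e) * tail M x \<le> tail_conv M x \<and> tail_conv M x \<le> (c + e) * tail M x"
      using equiv_bounds[OF E pos c e(1)] by (auto simp: eventually_at_top_linorder)
    show ?thesis
    proof (intro exI[of _ "max X 0"] allI impI)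
      fix x0 v assume x0: "max X 0 \<le> x0" and v: "ax x0 < v"
      obtain k0 where k: "a\<^sup>2 \<le> k0 + (c + e) * (a - ax x0)"
          "\<forall>v > ax x0. v\<^sup>2 \<ge> k0 + (c - e) * (v - ax x0)"
        using core[OF D pos H e, of x0] X x0 Afin unfolding a_def ax_def A_def by auto
      show "a\<^sup>2 - (c + e) * (a - ax x0) + (c - e) * (v - ax x0) \<le> v\<^sup>2"
        using k(1) k(2)[rule_format, OF v] by linarith
    qed
  qed
  have c2a: "c = 2 * a" by (rule arith_final[OF c axnn axa conv Hyp]) auto
  show ?thesis using int E by (simp add: mean c2a)
qed

end
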